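(* For a mutually orthogonal $d$-dimensional pure-state ensemble $\Omega=\{(p_i,|\psi_i\rangle)\}_{i=0}^{k-1}$, \[ \mathbf{C}_{\mathrm{MIO}}(\Omega)+\mathbf{S}_{\min}(\Omega)\le \log_2 d, \] where $\mathbf{S}_{\min}(\Omega)=-\log_2 p_{\max}$ with $p_{\max}=\max_i p_i$ (the min-entropy of the average state $\hat\omega=\sum_i p_i|\psi_i\rangle\langle\psi_i|$).
   Context: Incoherent states $\mathcal{I}$ are density matrices diagonal in the computational basis; MIO are channels mapping $\mathcal{I}$ into $\mathcal{I}$. Robustness of coherence: $C_R(\rho)=\min\{s\ge0:(\rho+s\tau)/(1+s)\in\mathcal{I}\text{ for some state }\tau\}$. Post-discrimination coherence: $\mathbf{C}_{\mathrm{MIO}}(\Omega)=\log_2(1+\eta)$, $\eta=\max\sum_j p_j C_R(\sigma_j)$ over MIO channels $\mathcal{N}_{A\to BA'}$ ($\dim B=k$, $A'\cong A$) with $\sigma_j=\mathrm{tr}_B[\mathcal{N}(\rho_j)]$ and $\sum_j p_j\mathrm{tr}[\mathcal{N}(\rho_j)(|j\rangle\langle j|_B\otimes I_{A'})]=P_{\mathrm{suc}}(\Omega)$, the optimal POVM discrimination probability (equal to 1 here). *)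

theory Defs
  imports Complex_Main
begin

text \<open>Finite-dimensional matrices are represented as functions nat => nat => complex;
  an n x n matrix only uses the entries with both indices below n.
  Tensor products use the index convention (a, i) |-> a * n + i (first factor outer).\<close>

type_synonym cmat = "nat \<Rightarrow> nat \<Rightarrow> complex"

definition psd :: "nat \<Rightarrow> cmat \<Rightarrow> bool" where
  "psd n M \<longleftrightarrow> (\<forall>v :: nat \<Rightarrow> complex.
     let q = (\<Sum>i<n. \<Sum>j<n. cnj (v i) * M i j * v j) in Im q = 0 \<and> Re q \<ge> 0)"

definition mtrace :: "nat \<Rightarrow> cmat \<Rightarrow> complex" where
  "mtrace n M = (\<Sum>i<n. M i i)"

definition density :: "nat \<Rightarrow> cmat \<Rightarrow> bool" where
  "density n \<rho> \<longleftrightarrow> psd n \<rho> \<and> mtrace n \<rho> = 1"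

definition incoherent :: "nat \<Rightarrow> cmat \<Rightarrow> bool" where
  "incoherent n \<rho> \<longleftrightarrow> density n \<rho> \<and> (\<forall>i<n. \<forall>j<n. i \<noteq> j \<longrightarrow> \<rho> i j = 0)"

definition robustness :: "nat \<Rightarrow> cmat \<Rightarrow> real" where
  "robustness n \<rho> = Inf {s::real. s \<ge> 0 \<and> (\<exists>\<tau>. density n \<tau> \<and>
      incoherent n (\<lambda>i j. (\<rho> i j + complex_of_real s * \<tau> i j) / complex_of_real (1 + s)))}"

definition block :: "nat \<Rightarrow> cmat \<Rightarrow> nat \<Rightarrow> nat \<Rightarrow> cmat" where
  "block n X a b = (\<lambda>i j. X (a * n + i) (b * n + j))"

text \<open>(id_m (x) Phi) applied to X, where Phi maps n x n to n' x n' matrices.\<close>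
definition ampliate :: "nat \<Rightarrow> nat \<Rightarrow> (cmat \<Rightarrow> cmat) \<Rightarrow> cmat \<Rightarrow> cmat" where
  "ampliate n n' \<Phi> X = (\<lambda>r s. \<Phi> (block n X (r div n') (s div n')) (r mod n') (s mod n'))"

definition channel :: "nat \<Rightarrow> nat \<Rightarrow> (cmat \<Rightarrow> cmat) \<Rightarrow> bool" where
  "channel n n' \<Phi> \<longleftrightarrow>
     (\<forall>X Y. (\<forall>i<n. \<forall>j<n. X i j = Y i j) \<longrightarrow> (\<forall>i<n'. \<forall>j<n'. \<Phi> X i j = \<Phi> Y i j)) \<and>
     (\<forall>c X Y. \<forall>i<n'. \<forall>j<n'. \<Phi> (\<lambda>a b. c * X a b + Y a b) i j = c * \<Phi> X i j + \<Phi> Y i j) \<and>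
     (\<forall>m X. psd (m * n) X \<longrightarrow> psd (m * n') (ampliate n n' \<Phi> X)) \<and>
     (\<forall>X. mtrace n' (\<Phi> X) = mtrace n X)"

definition MIO :: "nat \<Rightarrow> nat \<Rightarrow> (cmat \<Rightarrow> cmat) \<Rightarrow> bool" where
  "MIO n n' \<Phi> \<longleftrightarrow> channel n n' \<Phi> \<and> (\<forall>\<rho>. incoherent n \<rho> \<longrightarrow> incoherent n' (\<Phi> \<rho>))"

definition proj :: "(nat \<Rightarrow> complex) \<Rightarrow> cmat" where
  "proj v = (\<lambda>a b. v a * cnj (v b))"

definition inner :: "nat \<Rightarrow> (nat \<Rightarrow> complex) \<Rightarrow> (nat \<Rightarrow> complex) \<Rightarrow> complex" where
  "inner d u v = (\<Sum>a<d. cnj (u a) * v a)"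

definition mprod_trace :: "nat \<Rightarrow> cmat \<Rightarrow> cmat \<Rightarrow> complex" where
  "mprod_trace d M N = (\<Sum>a<d. \<Sum>b<d. M a b * N b a)"

definition povm :: "nat \<Rightarrow> nat \<Rightarrow> (nat \<Rightarrow> cmat) \<Rightarrow> bool" where
  "povm d k M \<longleftrightarrow> (\<forall>j<k. psd d (M j)) \<and>
     (\<forall>a<d. \<forall>b<d. (\<Sum>j<k. M j a b) = (if a = b then 1 else 0))"

definition P_suc :: "nat \<Rightarrow> nat \<Rightarrow> (nat \<Rightarrow> real) \<Rightarrow> (nat \<Rightarrow> cmat) \<Rightarrow> real" where
  "P_suc d k p \<rho> = Sup {Re (\<Sum>j<k. complex_of_real (p j) * mprod_trace d (M j) (\<rho> j)) | M. povm d k M}"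

definition ptrace_B :: "nat \<Rightarrow> nat \<Rightarrow> cmat \<Rightarrow> cmat" where
  "ptrace_B k d X = (\<lambda>i j. \<Sum>b<k. X (b * d + i) (b * d + j))"

text \<open>tr[X (|j><j|_B (x) I_{A'})].\<close>
definition guess_weight :: "nat \<Rightarrow> cmat \<Rightarrow> nat \<Rightarrow> complex" where
  "guess_weight d X j = (\<Sum>i<d. X (j * d + i) (j * d + i))"

definition eta_MIO :: "nat \<Rightarrow> nat \<Rightarrow> (nat \<Rightarrow> real) \<Rightarrow> (nat \<Rightarrow> cmat) \<Rightarrow> real" where
  "eta_MIO d k p \<rho> = Sup {(\<Sum>j<k. p j * robustness d (ptrace_B k d (N (\<rho> j)))) | N.
      MIO d (k * d) N \<and>
      (\<Sum>j<k. complex_of_real (p j) * guess_weight d (N (\<rho> j)) j) = complex_of_real (P_suc d k p \<rho>)}"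

definition C_MIO :: "nat \<Rightarrow> nat \<Rightarrow> (nat \<Rightarrow> real) \<Rightarrow> (nat \<Rightarrow> cmat) \<Rightarrow> real" where
  "C_MIO d k p \<rho> = log 2 (1 + eta_MIO d k p \<rho>)"

definition S_min :: "nat \<Rightarrow> (nat \<Rightarrow> real) \<Rightarrow> real" where
  "S_min k p = - log 2 (Max (p ` {..<k}))"

end

theory Submission
  imports Defs
begin


definition qf :: "nat \<Rightarrow> (nat \<Rightarrow> complex) \<Rightarrow> cmat \<Rightarrow> complex" where
  "qf n v M = (\<Sum>i<n. \<Sum>j<n. cnj (v i) * M i j * v j)"

lemma psd_qf: "psd n M \<longleftrightarrow> (\<forall>v. Im (qf n v M) = 0 \<and> Re (qf n v M) \<ge> 0)"
  unfolding psd_def qf_def Let_def by simp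

lemma sum_block:
  fixes f :: "nat \<Rightarrow> 'a::comm_monoid_add"
  shows "(\<Sum>r\<in>{a..<a+n}. f r) = (\<Sum>i<n. f (a+i))"
proof -
  have "(\<Sum>r\<in>{0+a..<n+a}. f r) = (\<Sum>i\<in>{0..<n}. f (i+a))"
    by (rule sum.shift_bounds_nat_ivl)
  then show ?thesis by (simp add: add.commute lessThan_atLeast0)
qed

lemma sum_split:
  fixes f :: "nat \<Rightarrow> 'a::comm_monoid_add"
  shows "(\<Sum>r<m*n. f r) = (\<Sum>a<m. \<Sum>i<n. f (a*n+i))"
  using sum.nat_group[of "\<lambda>r. f r" n m] by (simp add: sum_block)


lemma ifm1[simp]: "(if b then (x::complex) else 0) * y = (if b then x * y else 0)" by simp
lemma ifm2[simp]: "y * (if b then (x::complex) else 0) = (if b then y * x else 0)" by simp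
lemma ifm3[simp]: "cnj (if b then (x::complex) else 0) = (if b then cnj x else 0)" by simp

lemma sum_two:
  fixes g :: "nat \<Rightarrow> 'a::comm_monoid_add"
  assumes "i < n" "p < n" "i \<noteq> p" "\<And>a. a \<noteq> i \<Longrightarrow> a \<noteq> p \<Longrightarrow> g a = 0"
  shows "(\<Sum>a<n. g a) = g i + g p"
proof -
  have "(\<Sum>a<n. g a) = (\<Sum>a\<in>{i,p}. g a)"
    using assms by (intro sum.mono_neutral_right) auto
  then show ?thesis using assms(3) by simp
qed

lemma psd_diag:
  assumes "psd n M" "i < n"
  shows "Im (M i i) = 0 \<and> Re (M i i) \<ge> 0"
proof -
  have "qf n (\<lambda>x. if x = i then 1 else 0) M = M i i"
    using assms(2) by (simp add: qf_def)
  then show ?thesis using assms(1) unfolding psd_qf by metis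
qed

lemma qf_two:
  assumes "i < n" "p < n" "i \<noteq> p"
  shows "qf n (\<lambda>x. if x = i then z else if x = p then 1 else 0) M
     = cnj z * z * M i i + cnj z * M i p + z * M p i + M p p"
proof -
  let ?v = "\<lambda>x. if x = i then z else if x = p then 1 else (0::complex)"
  have inner: "(\<Sum>b<n. M a b * ?v b) = M a i * z + M a p" for a
    by (subst sum_two[OF assms]) (use assms in auto)
  have "qf n ?v M = (\<Sum>a<n. cnj (?v a) * (\<Sum>b<n. M a b * ?v b))"
    unfolding qf_def by (simp add: sum_distrib_left mult.assoc)
  also have "\<dots> = (\<Sum>a<n. cnj (?v a) * (M a i * z + M a p))" by (simp only: inner)
  also have "\<dots> = cnj z * (M i i * z + M i p) + (M p i * z + M p p)"
    by (subst sum_two[OF assms]) (use assms in auto)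
  finally show ?thesis by (simp add: algebra_simps)
qed


lemma lin_bound:
  fixes x c :: real
  assumes "\<And>t. t * x + c \<ge> 0"
  shows "x = 0"
proof (rule ccontr)
  assume "x \<noteq> 0"
  have "(-(\<bar>c\<bar> + 1) / x) * x + c \<ge> 0" by (rule assms)
  also have "(-(\<bar>c\<bar> + 1) / x) * x + c = -(\<bar>c\<bar> + 1) + c" using \<open>x \<noteq> 0\<close> by simp
  finally show False by linarith
qed

lemma psd_zero_diag:
  assumes "psd n M" "i < n" "p < n" "M i i = 0"
  shows "M i p = 0 \<and> M p i = 0"
proof (cases "i = p")
  case True then show ?thesis using assms by simp
next
  case False
  let ?a = "M i p" and ?b = "M p i" and ?c = "M p p"
  have q: "Im (cnj z * ?a + z * ?b + ?c) = 0 \<and> Re (cnj z * ?a + z * ?b + ?c) \<ge> 0" for z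
  proof -
    have "qf n (\<lambda>x. if x = i then z else if x = p then 1 else 0) M = cnj z * ?a + z * ?b + ?c"
      using qf_two[OF assms(2,3) False, of z M] assms(4) by simp
    then show ?thesis using assms(1) unfolding psd_qf by metis
  qed
  have r1: "t * Re (?a + ?b) + Re ?c \<ge> 0" for t
    using q[of "complex_of_real t"] by (simp add: algebra_simps)
  have i1: "t * Im (?a + ?b) + Im ?c = 0" for t
    using q[of "complex_of_real t"] by (simp add: algebra_simps)
  have r2: "t * Im (?a - ?b) + Re ?c \<ge> 0" for t
    using q[of "\<i> * complex_of_real t"] by (simp add: algebra_simps)
  have i2: "t * Re (?b - ?a) + Im ?c = 0" for t
    using q[of "\<i> * complex_of_real t"] by (simp add: algebra_simps)
  have "Re (?a + ?b) = 0" using lin_bound[of "Re (?a + ?b)" "Re ?c"] r1 by simp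
  moreover have "Im (?a - ?b) = 0" using lin_bound[of "Im (?a - ?b)" "Re ?c"] r2 by simp
  moreover have "Im (?a + ?b) = 0" using i1[of 1] i1[of 0] by simp
  moreover have "Re (?b - ?a) = 0" using i2[of 1] i2[of 0] by simp
  ultimately show ?thesis by (simp add: complex_eq_iff)
qed



lemma sum_one:
  fixes h :: "nat \<Rightarrow> 'a::comm_monoid_add"
  assumes "j < k" "\<And>b. b < k \<Longrightarrow> b \<noteq> j \<Longrightarrow> h b = 0"
  shows "(\<Sum>b<k. h b) = h j"
proof -
  have "(\<Sum>b<k. h b) = (\<Sum>b\<in>{j}. h b)"
    using assms by (intro sum.mono_neutral_right) auto
  then show ?thesis by simp
qed

lemma divmod_simps[simp]:
  assumes "i < (d::nat)"
  shows "(b * d + i) div d = b" "(b * d + i) mod d = i"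
  using assms by auto

lemma sum_embed:
  fixes g :: "nat \<Rightarrow> 'a::comm_monoid_add"
  assumes "j < k" "\<And>r. r div d \<noteq> j \<Longrightarrow> g r = 0"
  shows "(\<Sum>r<k*d. g r) = (\<Sum>i<d. g (j*d+i))"
proof -
  have "(\<Sum>r<k*d. g r) = (\<Sum>b<k. \<Sum>i<d. g (b*d+i))" by (rule sum_split)
  also have "\<dots> = (\<Sum>i<d. g (j*d+i))"
  proof (rule sum_one[OF assms(1)])
    fix b assume "b < k" "b \<noteq> j"
    show "(\<Sum>i<d. g (b*d+i)) = 0"
      by (rule sum.neutral) (use assms(2) \<open>b \<noteq> j\<close> in auto)
  qed
  finally show ?thesis .
qed

definition embed :: "nat \<Rightarrow> nat \<Rightarrow> (nat \<Rightarrow> complex) \<Rightarrow> nat \<Rightarrow> complex" where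
  "embed d j v = (\<lambda>r. if r div d = j then v (r mod d) else 0)"

definition dblock :: "nat \<Rightarrow> cmat \<Rightarrow> nat \<Rightarrow> cmat" where
  "dblock d A j = (\<lambda>i i'. A (j*d+i) (j*d+i'))"

lemma qf_embed:
  assumes "j < k"
  shows "qf (k*d) (embed d j v) A = qf d v (dblock d A j)"
proof -
  have "qf (k*d) (embed d j v) A = (\<Sum>i<d. \<Sum>s<k*d. cnj (embed d j v (j*d+i)) * A (j*d+i) s * embed d j v s)"
    unfolding qf_def by (rule sum_embed[OF assms]) (simp add: embed_def cong: if_cong)
  also have "\<dots> = (\<Sum>i<d. \<Sum>i'<d. cnj (embed d j v (j*d+i)) * A (j*d+i) (j*d+i') * embed d j v (j*d+i'))"
    by (intro sum.cong refl sum_embed[OF assms]) (simp add: embed_def)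
  also have "\<dots> = qf d v (dblock d A j)"
    unfolding qf_def dblock_def embed_def by (intro sum.cong refl) simp
  finally show ?thesis .
qed

lemma psd_dblock:
  assumes "psd (k*d) A" "j < k"
  shows "psd d (dblock d A j)"
  using assms qf_embed[OF assms(2)] unfolding psd_qf by metis



definition mp :: "nat \<Rightarrow> nat \<Rightarrow> (nat \<Rightarrow> nat \<Rightarrow> complex) \<Rightarrow> (nat \<Rightarrow> nat) \<Rightarrow> cmat \<Rightarrow> cmat" where
  "mp n T w ot Y = (\<lambda>p q. if p = q then (\<Sum>t<T. if ot t = p then qf n (w t) Y else 0) else 0)"

lemma qf_split:
  "qf (m*n) v A = (\<Sum>\<alpha><m. \<Sum>a<n. \<Sum>\<beta><m. \<Sum>b<n. cnj (v (\<alpha>*n+a)) * A (\<alpha>*n+a) (\<beta>*n+b) * v (\<beta>*n+b))"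
  unfolding qf_def by (subst sum_split) (simp add: sum_split)

lemma qf_lin: "qf n w (\<lambda>a b. c * X a b + Y a b) = c * qf n w X + qf n w Y"
  unfolding qf_def by (simp add: algebra_simps sum.distrib sum_distrib_left)

lemma qf_local: "(\<forall>i<n. \<forall>j<n. X i j = Y i j) \<Longrightarrow> qf n w X = qf n w Y"
  unfolding qf_def by (intro sum.cong refl) auto

lemma mp_trace:
  assumes "\<forall>t<T. ot t < n'"
  shows "mtrace n' (mp n T w ot X) = (\<Sum>t<T. qf n (w t) X)"
proof -
  have "mtrace n' (mp n T w ot X) = (\<Sum>p<n'. \<Sum>t<T. if ot t = p then qf n (w t) X else 0)"
    unfolding mtrace_def mp_def by simp
  also have "\<dots> = (\<Sum>t<T. \<Sum>p<n'. if ot t = p then qf n (w t) X else 0)" by (rule sum.swap)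
  also have "\<dots> = (\<Sum>t<T. qf n (w t) X)"
    using assms by (intro sum.cong refl) simp
  finally show ?thesis .
qed

lemma complete_trace:
  assumes "\<forall>a<n. \<forall>b<n. (\<Sum>t<T. cnj (w t a) * w t b) = (if a = b then 1 else 0)"
  shows "(\<Sum>t<T. qf n (w t) X) = mtrace n X"
proof -
  have "(\<Sum>t<T. qf n (w t) X) = (\<Sum>a<n. \<Sum>b<n. X a b * (\<Sum>t<T. cnj (w t a) * w t b))"
    unfolding qf_def by (simp add: sum_distrib_left sum.swap[of _ "{..<T}"] mult_ac)
  also have "\<dots> = (\<Sum>a<n. \<Sum>b<n. X a b * (if a = b then 1 else 0))"
    using assms by (intro sum.cong refl) auto
  also have "\<dots> = mtrace n X" unfolding mtrace_def by simp
  finally show ?thesis .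
qed


lemma amp_qf:
  assumes "0 < n" "0 < n'" "\<forall>t<T. ot t < n'"
  shows "qf (m*n') v (ampliate n n' (mp n T w ot) X)
       = (\<Sum>t<T. qf (m*n) (\<lambda>r. v ((r div n)*n' + ot t) * w t (r mod n)) X)"
proof -
  define G where "G t = (\<Sum>\<alpha><m. \<Sum>\<beta><m. cnj (v (\<alpha>*n'+ot t)) * qf n (w t) (block n X \<alpha> \<beta>) * v (\<beta>*n'+ot t))" for t
  have L1: "qf (m*n') v (ampliate n n' (mp n T w ot) X)
     = (\<Sum>\<alpha><m. \<Sum>p<n'. \<Sum>\<beta><m. \<Sum>q<n'. cnj (v (\<alpha>*n'+p)) * mp n T w ot (block n X \<alpha> \<beta>) p q * v (\<beta>*n'+q))"
    unfolding qf_split ampliate_def by (intro sum.cong refl) simp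
  also have "\<dots> = (\<Sum>\<alpha><m. \<Sum>p<n'. \<Sum>\<beta><m. cnj (v (\<alpha>*n'+p)) * (\<Sum>t<T. if ot t = p then qf n (w t) (block n X \<alpha> \<beta>) else 0) * v (\<beta>*n'+p))"
    unfolding mp_def by (intro sum.cong refl) simp
  also have "\<dots> = (\<Sum>\<alpha><m. \<Sum>p<n'. \<Sum>\<beta><m. \<Sum>t<T. if ot t = p then cnj (v (\<alpha>*n'+ot t)) * qf n (w t) (block n X \<alpha> \<beta>) * v (\<beta>*n'+ot t) else 0)"
    by (intro sum.cong refl) (simp add: sum_distrib_left sum_distrib_right cong: if_cong)
  also have "\<dots> = (\<Sum>t<T. \<Sum>\<alpha><m. \<Sum>\<beta><m. \<Sum>p<n'. if ot t = p then cnj (v (\<alpha>*n'+ot t)) * qf n (w t) (block n X \<alpha> \<beta>) * v (\<beta>*n'+ot t) else 0)"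
  proof -
    define F where "F t \<alpha> \<beta> p = (if ot t = p then cnj (v (\<alpha>*n'+ot t)) * qf n (w t) (block n X \<alpha> \<beta>) * v (\<beta>*n'+ot t) else 0)" for t \<alpha> \<beta> p
    have "(\<Sum>\<alpha><m. \<Sum>p<n'. \<Sum>\<beta><m. \<Sum>t<T. F t \<alpha> \<beta> p) = (\<Sum>\<alpha><m. \<Sum>p<n'. \<Sum>t<T. \<Sum>\<beta><m. F t \<alpha> \<beta> p)"
      by (simp only: sum.swap[of _ "{..<m}" "{..<T}"])
    also have "\<dots> = (\<Sum>\<alpha><m. \<Sum>t<T. \<Sum>p<n'. \<Sum>\<beta><m. F t \<alpha> \<beta> p)"
      by (simp only: sum.swap[of _ "{..<n'}" "{..<T}"])
    also have "\<dots> = (\<Sum>t<T. \<Sum>\<alpha><m. \<Sum>p<n'. \<Sum>\<beta><m. F t \<alpha> \<beta> p)"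
      by (rule sum.swap)
    also have "\<dots> = (\<Sum>t<T. \<Sum>\<alpha><m. \<Sum>\<beta><m. \<Sum>p<n'. F t \<alpha> \<beta> p)"
      by (simp only: sum.swap[of _ "{..<n'}" "{..<m}"])
    finally show ?thesis unfolding F_def .
  qed
  also have "\<dots> = (\<Sum>t<T. G t)"
    unfolding G_def using assms(3) by (intro sum.cong refl) simp
  finally have LHS: "qf (m*n') v (ampliate n n' (mp n T w ot) X) = (\<Sum>t<T. G t)" .
  have R: "qf (m*n) (\<lambda>r. v ((r div n)*n' + ot t) * w t (r mod n)) X = G t" for t
  proof -
    have "qf (m*n) (\<lambda>r. v ((r div n)*n' + ot t) * w t (r mod n)) X
      = (\<Sum>\<alpha><m. \<Sum>a<n. \<Sum>\<beta><m. \<Sum>b<n. cnj (v (\<alpha>*n'+ot t)) * (cnj (w t a) * X (\<alpha>*n+a) (\<beta>*n+b) * w t b) * v (\<beta>*n'+ot t))"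
      unfolding qf_split by (intro sum.cong refl) (simp add: mult_ac)
    also have "\<dots> = (\<Sum>\<alpha><m. \<Sum>\<beta><m. \<Sum>a<n. \<Sum>b<n. cnj (v (\<alpha>*n'+ot t)) * (cnj (w t a) * X (\<alpha>*n+a) (\<beta>*n+b) * w t b) * v (\<beta>*n'+ot t))"
      by (simp only: sum.swap[of _ "{..<n}" "{..<m}"])
    also have "\<dots> = G t"
      unfolding G_def qf_def block_def by (simp add: sum_distrib_left sum_distrib_right)
    finally show ?thesis .
  qed
  show ?thesis unfolding LHS R ..
qed



lemma channel_pos:
  assumes "channel n n' \<Phi>" "psd n X"
  shows "psd n' (\<Phi> X)"
proof -
  have "psd (1*n') (ampliate n n' \<Phi> X)" using assms unfolding channel_def by (metis mult_1)
  moreover have "block n X 0 0 = X" unfolding block_def by simp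
  moreover have "qf n' v (ampliate n n' \<Phi> X) = qf n' v (\<Phi> X)" for v
    unfolding qf_def ampliate_def by (intro sum.cong refl) (simp add: \<open>block n X 0 0 = X\<close>)
  ultimately show ?thesis unfolding psd_qf by simp
qed

lemma channel_lin:
  assumes "channel n n' \<Phi>" "i < n'" "j < n'"
  shows "\<Phi> (\<lambda>a b. c * X a b + Y a b) i j = c * \<Phi> X i j + \<Phi> Y i j"
  using assms unfolding channel_def by blast

lemma channel_local:
  assumes "channel n n' \<Phi>" "\<forall>i<n. \<forall>j<n. X i j = Y i j" "i < n'" "j < n'"
  shows "\<Phi> X i j = \<Phi> Y i j"
  using assms unfolding channel_def by blast

lemma channel_trace:
  assumes "channel n n' \<Phi>"
  shows "mtrace n' (\<Phi> X) = mtrace n X"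
  using assms unfolding channel_def by blast

lemma if_add0: "(if b then (x::complex) + y else 0) = (if b then x else 0) + (if b then y else 0)" by simp

lemma mp_channel:
  assumes "0 < n" "0 < n'" "\<forall>t<T. ot t < n'"
    and comp: "\<forall>a<n. \<forall>b<n. (\<Sum>t<T. cnj (w t a) * w t b) = (if a = b then 1 else 0)"
  shows "channel n n' (mp n T w ot)"
  unfolding channel_def
proof (intro conjI allI impI)
  fix X Y :: cmat and i j
  assume "\<forall>i<n. \<forall>j<n. X i j = Y i j"
  then show "mp n T w ot X i j = mp n T w ot Y i j"
    unfolding mp_def using qf_local[of n X Y] by (simp cong: if_cong)
next
  fix c X Y i j
  assume "i < n'" "j < n'"
  show "mp n T w ot (\<lambda>a b. c * X a b + Y a b) i j = c * mp n T w ot X i j + mp n T w ot Y i j"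
    unfolding mp_def qf_lin by (simp add: if_add0 sum.distrib sum_distrib_left cong: if_cong)
next
  fix m X
  assume "psd (m*n) X"
  then show "psd (m*n') (ampliate n n' (mp n T w ot) X)"
    unfolding psd_qf amp_qf[OF assms(1-3)]
    by (simp add: Im_sum Re_sum sum_nonneg)
next
  fix X
  show "mtrace n' (mp n T w ot X) = mtrace n X"
    using mp_trace[OF assms(3)] complete_trace[OF comp] by simp
qed

lemma mp_MIO:
  assumes "0 < n" "0 < n'" "\<forall>t<T. ot t < n'"
    and comp: "\<forall>a<n. \<forall>b<n. (\<Sum>t<T. cnj (w t a) * w t b) = (if a = b then 1 else 0)"
  shows "MIO n n' (mp n T w ot)"
proof -
  have ch: "channel n n' (mp n T w ot)" by (rule mp_channel[OF assms])
  show ?thesis unfolding MIO_def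
  proof (intro conjI ch allI impI)
    fix \<rho> assume "incoherent n \<rho>"
    then have "psd n \<rho>" "mtrace n \<rho> = 1" unfolding incoherent_def density_def by auto
    then show "incoherent n' (mp n T w ot \<rho>)"
      unfolding incoherent_def density_def
      using channel_pos[OF ch] channel_trace[OF ch] by (auto simp: mp_def)
  qed
qed



definition Sm :: "nat \<Rightarrow> (nat \<Rightarrow> nat \<Rightarrow> complex) \<Rightarrow> cmat" where
  "Sm k \<psi> a b = (\<Sum>j<k. \<psi> j a * cnj (\<psi> j b))"
definition Pm :: "nat \<Rightarrow> (nat \<Rightarrow> nat \<Rightarrow> complex) \<Rightarrow> cmat" where
  "Pm k \<psi> a b = (if a = b then 1 else 0) - Sm k \<psi> a b"
definition wv :: "nat \<Rightarrow> (nat \<Rightarrow> nat \<Rightarrow> complex) \<Rightarrow> nat \<Rightarrow> nat \<Rightarrow> complex" where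
  "wv k \<psi> t = (if t < k then \<psi> t else (\<lambda>a. Pm k \<psi> a (t - k)))"

lemma sum_add_split:
  fixes f :: "nat \<Rightarrow> 'a::comm_monoid_add"
  shows "(\<Sum>t<k+d. f t) = (\<Sum>t<k. f t) + (\<Sum>i<d. f (k+i))"
proof -
  have "{..<k+d} = {..<k} \<union> {k..<k+d}" by auto
  then have "(\<Sum>t<k+d. f t) = (\<Sum>t<k. f t) + (\<Sum>t\<in>{k..<k+d}. f t)"
    by (metis sum.union_disjoint finite_lessThan finite_atLeastLessThan ivl_disj_int(2) lessThan_atLeast0)
  then show ?thesis by (simp add: sum_block)
qed

context
  fixes d k :: nat and \<psi> :: "nat \<Rightarrow> nat \<Rightarrow> complex"
  assumes ON: "\<forall>i<k. \<forall>j<k. inner d (\<psi> i) (\<psi> j) = (if i = j then 1 else 0)"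
begin

lemma SS: "(\<Sum>i<d. Sm k \<psi> b i * Sm k \<psi> i a) = Sm k \<psi> b a"
proof -
  have "(\<Sum>i<d. Sm k \<psi> b i * Sm k \<psi> i a)
     = (\<Sum>j<k. \<Sum>l<k. \<psi> j b * (\<Sum>i<d. cnj (\<psi> j i) * \<psi> l i) * cnj (\<psi> l a))"
    unfolding Sm_def
    by (simp add: sum_distrib_left sum_distrib_right sum.swap[of _ "{..<d}"] mult_ac)
  also have "\<dots> = (\<Sum>j<k. \<Sum>l<k. \<psi> j b * (if j = l then 1 else 0) * cnj (\<psi> l a))"
    using ON unfolding inner_def by (intro sum.cong refl) simp
  also have "\<dots> = Sm k \<psi> b a" unfolding Sm_def by simp
  finally show ?thesis .
qed

lemma PP:
  assumes "a < d" "b < d"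
  shows "(\<Sum>i<d. Pm k \<psi> b i * Pm k \<psi> i a) = Pm k \<psi> b a"
proof -
  have "(\<Sum>i<d. Pm k \<psi> b i * Pm k \<psi> i a)
      = (\<Sum>i<d. (if b = i then 1 else 0) * (if i = a then 1 else 0)) - (\<Sum>i<d. (if b = i then 1 else 0) * Sm k \<psi> i a)
        - (\<Sum>i<d. Sm k \<psi> b i * (if i = a then 1 else 0)) + (\<Sum>i<d. Sm k \<psi> b i * Sm k \<psi> i a)"
    unfolding Pm_def by (simp add: algebra_simps sum_subtractf sum.distrib del: ifm1 ifm2)
  also have "\<dots> = Pm k \<psi> b a"
    unfolding SS using assms by (simp add: Pm_def)
  finally show ?thesis .
qed

lemma cnj_Pm: "cnj (Pm k \<psi> a b) = Pm k \<psi> b a"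
  unfolding Pm_def Sm_def by (simp add: mult.commute)

lemma complete:
  assumes "a < d" "b < d"
  shows "(\<Sum>t<k+d. cnj (wv k \<psi> t a) * wv k \<psi> t b) = (if a = b then 1 else 0)"
proof -
  have "(\<Sum>t<k+d. cnj (wv k \<psi> t a) * wv k \<psi> t b)
     = (\<Sum>t<k. cnj (\<psi> t a) * \<psi> t b) + (\<Sum>i<d. cnj (Pm k \<psi> a i) * Pm k \<psi> b i)"
    unfolding sum_add_split wv_def by simp
  also have "(\<Sum>t<k. cnj (\<psi> t a) * \<psi> t b) = Sm k \<psi> b a"
    unfolding Sm_def by (simp add: mult.commute)
  also have "(\<Sum>i<d. cnj (Pm k \<psi> a i) * Pm k \<psi> b i) = Pm k \<psi> b a"
    unfolding cnj_Pm using PP[OF assms] by (simp add: mult.commute)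
  finally show ?thesis unfolding Pm_def by auto
qed

lemma inner_wv:
  assumes "t < k + d" "j < k"
  shows "inner d (wv k \<psi> t) (\<psi> j) = (if t = j then 1 else 0)"
proof (cases "t < k")
  case True then show ?thesis using ON assms by (simp add: wv_def)
next
  case False
  define i where "i = t - k"
  have i: "i < d" "t = k + i" using assms False unfolding i_def by auto
  have "inner d (wv k \<psi> t) (\<psi> j) = (\<Sum>a<d. Pm k \<psi> i a * \<psi> j a)"
    unfolding inner_def wv_def using False cnj_Pm by (simp add: i_def)
  also have "\<dots> = \<psi> j i - (\<Sum>l<k. \<psi> l i * inner d (\<psi> l) (\<psi> j))"
    unfolding Pm_def Sm_def inner_def using i
    by (simp add: algebra_simps sum_subtractf sum_distrib_left sum_distrib_right sum.swap[of _ "{..<d}"] del: ifm1)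
  also have "\<dots> = 0" using ON assms by simp
  finally show ?thesis using False assms by simp
qed

end

lemma qf_proj: "qf n u (proj v) = inner n u v * cnj (inner n u v)"
  unfolding qf_def proj_def inner_def
  by (simp add: sum_distrib_left sum_distrib_right mult_ac)

lemma qf_proj_nonneg: "Im (qf n u (proj v)) = 0 \<and> Re (qf n u (proj v)) \<ge> 0"
  unfolding qf_proj by (simp add: complex_mult_cnj)



definition ct :: "nat \<Rightarrow> nat \<Rightarrow> nat" where "ct k t = (if t < k then t else 0)"

definition N0 :: "nat \<Rightarrow> nat \<Rightarrow> (nat \<Rightarrow> nat \<Rightarrow> complex) \<Rightarrow> cmat \<Rightarrow> cmat" where
  "N0 d k \<psi> = mp d (k+d) (wv k \<psi>) (\<lambda>t. ct k t * d)"

definition Mv :: "nat \<Rightarrow> nat \<Rightarrow> (nat \<Rightarrow> nat \<Rightarrow> complex) \<Rightarrow> nat \<Rightarrow> cmat" where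
  "Mv d k \<psi> j = (\<lambda>a b. \<Sum>t<k+d. if ct k t = j then proj (wv k \<psi> t) a b else 0)"

lemma qf_sum_if:
  "qf n v (\<lambda>a b. \<Sum>t<T. if g t then M t a b else 0) = (\<Sum>t<T. if g t then qf n v (M t) else 0)"
proof -
  have "qf n v (\<lambda>a b. \<Sum>t<T. if g t then M t a b else 0) = (\<Sum>i<n. \<Sum>j<n. \<Sum>t<T. cnj (v i) * (if g t then M t i j else 0) * v j)"
    unfolding qf_def by (simp add: sum_distrib_left sum_distrib_right)
  also have "\<dots> = (\<Sum>t<T. \<Sum>i<n. \<Sum>j<n. cnj (v i) * (if g t then M t i j else 0) * v j)"
    by (simp only: sum.swap[of _ "{..<n}" "{..<T}"])
  also have "\<dots> = (\<Sum>t<T. if g t then qf n v (M t) else 0)"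
    unfolding qf_def by (intro sum.cong refl) auto
  finally show ?thesis .
qed

lemma inner_cnj: "inner n u v = cnj (inner n v u)"
  unfolding inner_def by (simp add: mult.commute)

lemma mprod_trace_proj: "mprod_trace d M (proj v) = qf d v M"
  unfolding mprod_trace_def qf_def proj_def by (intro sum.cong refl) (simp add: mult_ac)

lemma qf_id: "qf n u (\<lambda>a b. if a = b then 1 else 0) = inner n u u"
  unfolding qf_def inner_def by (simp cong: if_cong)

context
  fixes d k :: nat and \<psi> :: "nat \<Rightarrow> nat \<Rightarrow> complex"
  assumes ON: "\<forall>i<k. \<forall>j<k. inner d (\<psi> i) (\<psi> j) = (if i = j then 1 else 0)"
    and dpos: "0 < d" and kpos: "0 < k"
begin

lemma ct_lt: "ct k t < k" using kpos unfolding ct_def by auto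

lemma ot_lt: "ct k t * d < k * d" using ct_lt dpos by simp

lemma N0_MIO: "MIO d (k*d) (N0 d k \<psi>)"
  unfolding N0_def
  by (rule mp_MIO) (use dpos kpos ot_lt complete[OF ON] in auto)

lemma qf_wv_proj:
  assumes "t < k + d" "j < k"
  shows "qf d (wv k \<psi> t) (proj (\<psi> j)) = (if t = j then 1 else 0)"
  using inner_wv[OF ON assms] by (simp add: qf_proj)

lemma N0_val:
  assumes "j < k"
  shows "N0 d k \<psi> (proj (\<psi> j)) p q = (if p = q \<and> p = j*d then 1 else 0)"
proof -
  have "(\<Sum>t<k+d. if ct k t * d = p then qf d (wv k \<psi> t) (proj (\<psi> j)) else 0)
       = (\<Sum>t<k+d. if t = j then (if ct k t * d = p then 1 else 0) else 0)"
    using qf_wv_proj assms by (intro sum.cong refl) auto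
  also have "\<dots> = (if j*d = p then 1 else 0)" using assms by (simp add: ct_def)
  finally show ?thesis unfolding N0_def mp_def by auto
qed

lemma N0_gw:
  assumes "j < k"
  shows "guess_weight d (N0 d k \<psi> (proj (\<psi> j))) j = 1"
proof -
  have "guess_weight d (N0 d k \<psi> (proj (\<psi> j))) j = (\<Sum>i<d. if i = 0 then 1 else 0)"
    unfolding guess_weight_def N0_val[OF assms] by (intro sum.cong refl) auto
  then show ?thesis using dpos by simp
qed

lemma Mv_povm: "povm d k (Mv d k \<psi>)"
  unfolding povm_def
proof (intro conjI allI impI)
  fix j assume "j < k"
  show "psd d (Mv d k \<psi> j)"
    unfolding psd_qf Mv_def qf_sum_if
    using qf_proj_nonneg by (simp add: Im_sum Re_sum sum_nonneg if_distrib cong: if_cong)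
next
  fix a b assume ab: "a < d" "b < d"
  have "(\<Sum>j<k. Mv d k \<psi> j a b) = (\<Sum>t<k+d. \<Sum>j<k. if ct k t = j then proj (wv k \<psi> t) a b else 0)"
    unfolding Mv_def by (rule sum.swap)
  also have "\<dots> = (\<Sum>t<k+d. proj (wv k \<psi> t) a b)"
    using ct_lt by (intro sum.cong refl) simp
  also have "\<dots> = cnj (\<Sum>t<k+d. cnj (wv k \<psi> t a) * wv k \<psi> t b)"
    unfolding proj_def by (simp add: mult.commute)
  also have "\<dots> = (if a = b then 1 else 0)" unfolding complete[OF ON ab] by simp
  finally show "(\<Sum>j<k. Mv d k \<psi> j a b) = (if a = b then 1 else 0)" .
qed

lemma Mv_val:
  assumes "j < k"
  shows "mprod_trace d (Mv d k \<psi> j) (proj (\<psi> j)) = 1"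
proof -
  have "mprod_trace d (Mv d k \<psi> j) (proj (\<psi> j)) = (\<Sum>t<k+d. if ct k t = j then qf d (\<psi> j) (proj (wv k \<psi> t)) else 0)"
    unfolding mprod_trace_proj Mv_def qf_sum_if ..
  also have "\<dots> = (\<Sum>t<k+d. if t = j then 1 else 0)"
  proof (intro sum.cong refl)
    fix t assume "t \<in> {..<k+d}"
    then have "qf d (\<psi> j) (proj (wv k \<psi> t)) = (if t = j then 1 else 0)"
      using inner_wv[OF ON _ assms, of t] by (simp add: qf_proj inner_cnj[of d "\<psi> j"])
    then show "(if ct k t = j then qf d (\<psi> j) (proj (wv k \<psi> t)) else 0) = (if t = j then 1 else 0)"
      using assms by (auto simp: ct_def)
  qed
  also have "\<dots> = 1" using assms by simp
  finally show ?thesis .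
qed

lemma povm_bound:
  assumes "povm d k M" "j < k"
  shows "Re (mprod_trace d (M j) (proj (\<psi> j))) \<le> 1"
proof -
  have nn: "Re (qf d (\<psi> j) (M l)) \<ge> 0" if "l < k" for l
    using assms(1) that unfolding povm_def psd_qf by blast
  have "Re (qf d (\<psi> j) (M j)) \<le> (\<Sum>l<k. Re (qf d (\<psi> j) (M l)))"
    using nn assms(2) by (intro member_le_sum) auto
  also have "(\<Sum>l<k. Re (qf d (\<psi> j) (M l))) = Re (qf d (\<psi> j) (\<lambda>a b. \<Sum>l<k. M l a b))"
    unfolding qf_def by (simp add: Re_sum sum_distrib_left sum_distrib_right sum.swap[of _ "{..<k}"])
  also have "qf d (\<psi> j) (\<lambda>a b. \<Sum>l<k. M l a b) = qf d (\<psi> j) (\<lambda>a b. if a = b then 1 else 0)"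
    using assms(1) unfolding povm_def by (intro qf_local) auto
  also have "\<dots> = 1" unfolding qf_id using ON assms(2) by simp
  finally show ?thesis unfolding mprod_trace_proj by simp
qed

lemma P_suc_one:
  assumes pnn: "\<forall>i<k. p i \<ge> 0" and psum: "(\<Sum>i<k. p i) = 1"
  shows "P_suc d k p (\<lambda>i. proj (\<psi> i)) = 1"
  unfolding P_suc_def
proof (rule cSup_eq_maximum)
  have "Re (\<Sum>j<k. complex_of_real (p j) * mprod_trace d (Mv d k \<psi> j) (proj (\<psi> j))) = 1"
    using psum by (simp add: Mv_val Re_sum)
  then show "1 \<in> {Re (\<Sum>j<k. complex_of_real (p j) * mprod_trace d (M j) (proj (\<psi> j))) |M. povm d k M}"
    using Mv_povm by (intro CollectI exI[of _ "Mv d k \<psi>"] conjI) auto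
next
  fix x assume "x \<in> {Re (\<Sum>j<k. complex_of_real (p j) * mprod_trace d (M j) (proj (\<psi> j))) |M. povm d k M}"
  then obtain M where M: "povm d k M" and x: "x = Re (\<Sum>j<k. complex_of_real (p j) * mprod_trace d (M j) (proj (\<psi> j)))"
    by blast
  have "x = (\<Sum>j<k. p j * Re (mprod_trace d (M j) (proj (\<psi> j))))"
    unfolding x by (simp add: Re_sum)
  also have "\<dots> \<le> (\<Sum>j<k. p j * 1)"
    using povm_bound[OF M] pnn by (intro sum_mono mult_left_mono) auto
  finally show "x \<le> 1" using psum by simp
qed

end


lemma psd_local:
  assumes "psd n A" "\<forall>i<n. \<forall>j<n. A i j = B i j"
  shows "psd n B"
  using assms qf_local[of n A B] unfolding psd_qf by metis

lemma mtrace_local: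
  assumes "\<forall>i<n. \<forall>j<n. A i j = B i j"
  shows "mtrace n A = mtrace n B"
  using assms unfolding mtrace_def by (intro sum.cong refl) auto

lemma incoherent_local:
  assumes "incoherent n A" "\<forall>i<n. \<forall>j<n. A i j = B i j"
  shows "incoherent n B"
  using assms psd_local[of n A B] mtrace_local[of n A B] unfolding incoherent_def density_def
  by metis

lemma qf_scale: "qf n v (\<lambda>i j. c * A i j) = c * qf n v A"
  unfolding qf_def by (simp add: sum_distrib_left mult_ac)

lemma psd_scale:
  assumes "psd n A" "c \<ge> 0"
  shows "psd n (\<lambda>i j. complex_of_real c * A i j)"
  using assms unfolding psd_qf qf_scale by simp

lemma mtrace_scale: "mtrace n (\<lambda>i j. c * A i j) = c * mtrace n A"
  unfolding mtrace_def by (simp add: sum_distrib_left)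

lemma qf_diff: "qf n v (\<lambda>i j. A i j - B i j) = qf n v A - qf n v B"
  unfolding qf_def by (simp add: algebra_simps sum_subtractf)

lemma mtrace_diff: "mtrace n (\<lambda>i j. A i j - B i j) = mtrace n A - mtrace n B"
  unfolding mtrace_def by (simp add: sum_subtractf)

lemma psd_diag_sum_zero:
  assumes "psd n A" "Re (mtrace n A) = 0" "i < n"
  shows "A i i = 0"
proof -
  have nn: "\<forall>a\<in>{..<n}. Re (A a a) \<ge> 0" using psd_diag[OF assms(1)] by auto
  have "(\<Sum>a<n. Re (A a a)) = 0" using assms(2) unfolding mtrace_def by (simp add: Re_sum)
  then have "Re (A i i) = 0" using sum_nonneg_eq_0_iff[of "{..<n}" "\<lambda>a. Re (A a a)"] nn assms(3) by auto
  moreover have "Im (A i i) = 0" using psd_diag[OF assms(1,3)] by simp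
  ultimately show ?thesis by (simp add: complex_eq_iff)
qed

lemma psd_trace_zero:
  assumes "psd n A" "Re (mtrace n A) = 0" "i < n" "j < n"
  shows "A i j = 0"
  using psd_zero_diag[OF assms(1,3,4) psd_diag_sum_zero[OF assms(1,2,3)]] by simp

lemma Id_psd: "psd n (\<lambda>a b. if a = b then 1 else 0)"
  unfolding psd_qf qf_id inner_def by (simp add: Im_sum Re_sum sum_nonneg complex_mult_cnj mult.commute)

lemma proj_psd: "psd n (proj v)"
  unfolding psd_qf using qf_proj_nonneg by blast



lemma idx_lt:
  assumes "b < (k::nat)" "i < d"
  shows "b*d+i < k*d"
proof -
  have "b*d+i < b*d+d" using assms by simp
  also have "\<dots> = (b+1)*d" by simp
  also have "\<dots> \<le> k*d" using assms by (intro mult_right_mono) auto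
  finally show ?thesis .
qed

definition Idm :: cmat where "Idm = (\<lambda>a b. if a = b then 1 else 0)"

context
  fixes d k :: nat and \<psi> :: "nat \<Rightarrow> nat \<Rightarrow> complex" and N :: "cmat \<Rightarrow> cmat"
  assumes ON: "\<forall>i<k. \<forall>j<k. inner d (\<psi> i) (\<psi> j) = (if i = j then 1 else 0)"
    and dpos: "0 < d" and kpos: "0 < k"
    and mio: "MIO d (k*d) N"
begin

lemma ch: "channel d (k*d) N" using mio unfolding MIO_def by simp

lemma N_zero: "r < k*d \<Longrightarrow> s < k*d \<Longrightarrow> N (\<lambda>a b. 0) r s = 0"
  using channel_lin[OF ch, of r s 1 "\<lambda>a b. 0" "\<lambda>a b. 0"] by simp

lemma compl_psd:
  assumes "j < k"
  shows "psd d (\<lambda>a b. Idm a b - proj (\<psi> j) a b)"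
proof -
  have eq: "\<forall>a<d. \<forall>b<d. (\<lambda>a b. \<Sum>t<k+d. if t \<noteq> j then proj (wv k \<psi> t) a b else 0) a b = Idm a b - proj (\<psi> j) a b"
  proof (intro allI impI)
    fix a b assume ab: "a < d" "b < d"
    have "(\<Sum>t<k+d. proj (wv k \<psi> t) a b) = cnj (\<Sum>t<k+d. cnj (wv k \<psi> t a) * wv k \<psi> t b)"
      unfolding proj_def by (simp add: mult.commute)
    also have "\<dots> = Idm a b" unfolding complete[OF ON ab] Idm_def by simp
    finally have tot: "(\<Sum>t<k+d. proj (wv k \<psi> t) a b) = Idm a b" .
    have "(\<Sum>t<k+d. proj (wv k \<psi> t) a b) = proj (wv k \<psi> j) a b + (\<Sum>t\<in>{..<k+d} - {j}. proj (wv k \<psi> t) a b)"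
      using assms by (subst sum.remove[of _ j]) auto
    moreover have "(\<Sum>t\<in>{..<k+d} - {j}. proj (wv k \<psi> t) a b) = (\<Sum>t<k+d. if t \<noteq> j then proj (wv k \<psi> t) a b else 0)"
      by (simp add: sum.If_cases) (rule sum.cong, auto)
    moreover have "wv k \<psi> j = \<psi> j" using assms by (simp add: wv_def)
    ultimately show "(\<lambda>a b. \<Sum>t<k+d. if t \<noteq> j then proj (wv k \<psi> t) a b else 0) a b = Idm a b - proj (\<psi> j) a b"
      using tot by simp
  qed
  have "psd d (\<lambda>a b. \<Sum>t<k+d. if t \<noteq> j then proj (wv k \<psi> t) a b else 0)"
    unfolding psd_qf qf_sum_if
    using qf_proj_nonneg by (simp add: Im_sum Re_sum sum_nonneg if_distrib cong: if_cong)
  then show ?thesis by (rule psd_local[OF _ eq])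
qed

lemma Ih_incoh: "incoherent d (\<lambda>a b. complex_of_real (1 / real d) * Idm a b)"
  unfolding incoherent_def density_def
proof (intro conjI allI impI)
  show "psd d (\<lambda>a b. complex_of_real (1 / real d) * Idm a b)"
    by (rule psd_scale) (auto simp: Idm_def Id_psd)
  show "mtrace d (\<lambda>a b. complex_of_real (1 / real d) * Idm a b) = 1"
    unfolding mtrace_scale by (simp add: mtrace_def Idm_def dpos)
qed (simp add: Idm_def)

lemma D_off:
  assumes "r < k*d" "s < k*d" "r \<noteq> s"
  shows "N Idm r s = 0"
proof -
  have "incoherent (k*d) (N (\<lambda>a b. complex_of_real (1 / real d) * Idm a b))"
    using mio Ih_incoh unfolding MIO_def by blast
  then have z: "N (\<lambda>a b. complex_of_real (1 / real d) * Idm a b) r s = 0"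
    using assms unfolding incoherent_def by blast
  have "Idm = (\<lambda>a b. of_nat d * (complex_of_real (1 / real d) * Idm a b) + 0)"
    using dpos by (auto simp: Idm_def fun_eq_iff)
  then have "N Idm r s = of_nat d * N (\<lambda>a b. complex_of_real (1 / real d) * Idm a b) r s + N (\<lambda>a b. 0) r s"
    using channel_lin[OF ch assms(1,2), of "of_nat d" "\<lambda>a b. complex_of_real (1 / real d) * Idm a b" "\<lambda>a b. 0"]
    by metis
  then show ?thesis using z N_zero assms by simp
qed

lemma D_psd: "psd (k*d) (N Idm)"
  by (rule channel_pos[OF ch]) (simp add: Idm_def Id_psd)

lemma D_trace: "mtrace (k*d) (N Idm) = of_nat d"
  unfolding channel_trace[OF ch] by (simp add: mtrace_def Idm_def)

lemma mtrace_proj: "mtrace n (proj v) = inner n v v"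
  unfolding mtrace_def proj_def inner_def by (simp add: mult.commute)

lemma X_psd: "psd (k*d) (N (proj (\<psi> j)))"
  by (rule channel_pos[OF ch proj_psd])

lemma X_trace: "j < k \<Longrightarrow> mtrace (k*d) (N (proj (\<psi> j))) = 1"
  unfolding channel_trace[OF ch] mtrace_proj using ON by simp

lemma DX_psd:
  assumes "j < k"
  shows "psd (k*d) (\<lambda>r s. N Idm r s - N (proj (\<psi> j)) r s)"
proof (rule psd_local[OF channel_pos[OF ch compl_psd[OF assms]]], intro allI impI)
  fix r s assume rs: "r < k*d" "s < k*d"
  have "Idm = (\<lambda>a b. 1 * proj (\<psi> j) a b + (Idm a b - proj (\<psi> j) a b))" by simp
  then have "N Idm r s = 1 * N (proj (\<psi> j)) r s + N (\<lambda>a b. Idm a b - proj (\<psi> j) a b) r s"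
    using channel_lin[OF ch rs, of 1 "proj (\<psi> j)" "\<lambda>a b. Idm a b - proj (\<psi> j) a b"] by metis
  then show "N (\<lambda>a b. Idm a b - proj (\<psi> j) a b) r s = N Idm r s - N (proj (\<psi> j)) r s" by simp
qed

lemma X_other:
  assumes j: "j < k" and gw: "guess_weight d (N (proj (\<psi> j))) j = 1"
    and b: "b < k" "b \<noteq> j" and i: "i < d"
  shows "N (proj (\<psi> j)) (b*d+i) (b*d+i) = 0"
proof -
  let ?X = "N (proj (\<psi> j))"
  define f where "f b = (\<Sum>i<d. Re (?X (b*d+i) (b*d+i)))" for b
  have nn: "Re (?X r r) \<ge> 0" "Im (?X r r) = 0" if "r < k*d" for r
    using psd_diag[OF X_psd that] by auto
  have fnn: "f b \<ge> 0" if "b < k" for b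
    unfolding f_def using that by (intro sum_nonneg nn(1) idx_lt) auto
  have "(\<Sum>b<k. f b) = Re (mtrace (k*d) ?X)"
    unfolding f_def mtrace_def Re_sum sum_split ..
  also have "\<dots> = 1" using X_trace[OF j] by simp
  finally have tot: "(\<Sum>b<k. f b) = 1" .
  have fj: "f j = 1" using gw unfolding f_def guess_weight_def by (metis Re_sum one_complex.sel)
  have "(\<Sum>b<k. f b) = f j + (\<Sum>b\<in>{..<k}-{j}. f b)"
    using j by (subst sum.remove[of _ j]) auto
  then have "(\<Sum>b\<in>{..<k}-{j}. f b) = 0" using tot fj by simp
  then have "f b = 0" using sum_nonneg_eq_0_iff[of "{..<k}-{j}" f] fnn b by auto
  then have "Re (?X (b*d+i) (b*d+i)) = 0"
    using sum_nonneg_eq_0_iff[of "{..<d}" "\<lambda>i. Re (?X (b*d+i) (b*d+i))"] nn(1)[OF idx_lt[OF b(1)]] i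
    unfolding f_def by auto
  moreover have "Im (?X (b*d+i) (b*d+i)) = 0" using nn(2)[OF idx_lt[OF b(1) i]] .
  ultimately show ?thesis by (simp add: complex_eq_iff)
qed

lemma sigma_eq:
  assumes j: "j < k" and gw: "guess_weight d (N (proj (\<psi> j))) j = 1"
    and i: "i < d" "i' < d"
  shows "ptrace_B k d (N (proj (\<psi> j))) i i' = dblock d (N (proj (\<psi> j))) j i i'"
  unfolding ptrace_B_def dblock_def
proof (rule sum_one[OF j])
  fix b assume True: "b < k" and b: "b \<noteq> j"
  have "N (proj (\<psi> j)) (b*d+i) (b*d+i) = 0" by (rule X_other[OF j gw True b i(1)])
  then show "N (proj (\<psi> j)) (b*d+i) (b*d+i') = 0"
    using psd_zero_diag[OF X_psd idx_lt[OF True i(1)] idx_lt[OF True i(2)]] by blast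
qed

lemma rob_bound:
  assumes j: "j < k" and gw: "guess_weight d (N (proj (\<psi> j))) j = 1"
  shows "0 \<le> robustness d (ptrace_B k d (N (proj (\<psi> j))))
    \<and> robustness d (ptrace_B k d (N (proj (\<psi> j)))) \<le> Re (mtrace d (dblock d (N Idm) j)) - 1"
proof -
  define X where "X = N (proj (\<psi> j))"
  define \<sigma> where "\<sigma> = ptrace_B k d X"
  define Dj where "Dj = dblock d (N Idm) j"
  define Xj where "Xj = dblock d X j"
  define lam where "lam = Re (mtrace d Dj)"
  have sX: "\<forall>i<d. \<forall>i'<d. Xj i i' = \<sigma> i i'"
    unfolding Xj_def \<sigma>_def X_def using sigma_eq[OF j gw] by simp
  have Dj_psd: "psd d Dj" unfolding Dj_def by (rule psd_dblock[OF D_psd j])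
  have DXj_psd: "psd d (\<lambda>i i'. Dj i i' - Xj i i')"
    using psd_dblock[OF DX_psd[OF j] j] unfolding Dj_def Xj_def X_def dblock_def .
  have Ds_psd: "psd d (\<lambda>i i'. Dj i i' - \<sigma> i i')"
    by (rule psd_local[OF DXj_psd]) (simp add: sX)
  have trXj: "mtrace d Xj = 1"
    using gw unfolding Xj_def X_def mtrace_def dblock_def guess_weight_def .
  have trs: "mtrace d \<sigma> = 1" using trXj mtrace_local[of d Xj \<sigma>] sX by simp
  have trDj: "mtrace d Dj = complex_of_real lam"
  proof -
    have "Im (mtrace d Dj) = 0"
      unfolding mtrace_def Im_sum using psd_diag[OF Dj_psd] by simp
    then show ?thesis unfolding lam_def by (simp add: complex_eq_iff)
  qed
  have "Re (mtrace d (\<lambda>i i'. Dj i i' - \<sigma> i i')) \<ge> 0"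
    unfolding mtrace_def Re_sum
  proof (intro sum_nonneg)
    fix i assume "i \<in> {..<d}"
    then show "0 \<le> Re (Dj i i - \<sigma> i i)" using psd_diag[OF Ds_psd, of i] by simp
  qed
  then have lam1: "lam \<ge> 1" unfolding mtrace_diff trDj trs by simp
  have Doff: "Dj i i' = 0" if "i < d" "i' < d" "i \<noteq> i'" for i i'
    unfolding Dj_def dblock_def using that by (intro D_off idx_lt j) auto
  have tgt: "incoherent d (\<lambda>i i'. complex_of_real (1 / lam) * Dj i i')"
    unfolding incoherent_def density_def
  proof (intro conjI allI impI)
    show "psd d (\<lambda>i i'. complex_of_real (1 / lam) * Dj i i')" using Dj_psd lam1 by (intro psd_scale) auto
    show "mtrace d (\<lambda>i i'. complex_of_real (1 / lam) * Dj i i') = 1"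
      unfolding mtrace_scale trDj using lam1 by (simp flip: of_real_mult)
  qed (simp add: Doff)
  define S where "S = {s::real. s \<ge> 0 \<and> (\<exists>\<tau>. density d \<tau> \<and>
      incoherent d (\<lambda>i j. (\<sigma> i j + complex_of_real s * \<tau> i j) / complex_of_real (1 + s)))}"
  have mem: "lam - 1 \<in> S"
  proof (cases "lam = 1")
    case True
    have "Re (mtrace d (\<lambda>i i'. Dj i i' - \<sigma> i i')) = 0" unfolding mtrace_diff trDj trs True by simp
    then have eq: "Dj i i' - \<sigma> i i' = 0" if "i < d" "i' < d" for i i'
      using psd_trace_zero[OF Ds_psd _ that] by simp
    have dens: "density d Dj" unfolding density_def using Dj_psd trDj True by simp
    have "incoherent d (\<lambda>i j. (\<sigma> i j + complex_of_real 0 * Dj i j) / complex_of_real (1 + 0))"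
      by (rule incoherent_local[OF tgt]) (use eq True in auto)
    then show ?thesis unfolding S_def using True dens by auto
  next
    case False
    then have lg: "lam > 1" using lam1 by simp
    define s where "s = lam - 1"
    have s0: "s > 0" using lg unfolding s_def by simp
    define \<tau> where "\<tau> = (\<lambda>i i'. complex_of_real (1 / s) * (Dj i i' - \<sigma> i i'))"
    have dens: "density d \<tau>" unfolding density_def \<tau>_def
    proof
      show "psd d (\<lambda>i i'. complex_of_real (1 / s) * (Dj i i' - \<sigma> i i'))"
        using Ds_psd s0 by (intro psd_scale) auto
      show "mtrace d (\<lambda>i i'. complex_of_real (1 / s) * (Dj i i' - \<sigma> i i')) = 1"
      proof -
        have "complex_of_real lam - 1 = complex_of_real s" unfolding s_def by simp
        then have "complex_of_real (1 / s) * (complex_of_real lam - 1) = complex_of_real ((1 / s) * s)"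
          by simp
        also have "\<dots> = 1" using s0 by simp
        finally show ?thesis unfolding mtrace_scale mtrace_diff trDj trs .
      qed
    qed
    have "incoherent d (\<lambda>i j. (\<sigma> i j + complex_of_real s * \<tau> i j) / complex_of_real (1 + s))"
    proof (rule incoherent_local[OF tgt], intro allI impI)
      fix i i' assume "i < d" "i' < d"
      have "complex_of_real s * \<tau> i i' = Dj i i' - \<sigma> i i'"
        unfolding \<tau>_def using s0 by (simp add: mult.assoc[symmetric] flip: of_real_mult)
      moreover have "1 + s = lam" unfolding s_def by simp
      ultimately show "complex_of_real (1 / lam) * Dj i i' = (\<sigma> i i' + complex_of_real s * \<tau> i i') / complex_of_real (1 + s)"
        by (simp add: divide_inverse mult.commute)
    qed
    then show ?thesis unfolding S_def s_def[symmetric] using s0 dens by auto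
  qed
  have bdd: "bdd_below S" unfolding S_def bdd_below_def by auto
  have R: "robustness d \<sigma> = Inf S" unfolding robustness_def S_def ..
  have "Inf S \<le> lam - 1" by (rule cInf_lower[OF mem bdd])
  moreover have "0 \<le> Inf S"
  proof (rule cInf_greatest)
    show "S \<noteq> {}" using mem by blast
  qed (simp add: S_def)
  ultimately show ?thesis using R unfolding \<sigma>_def X_def lam_def Dj_def by simp
qed

lemma gw_props:
  assumes j: "j < k"
  shows "Im (guess_weight d (N (proj (\<psi> j))) j) = 0 \<and> Re (guess_weight d (N (proj (\<psi> j))) j) \<ge> 0
     \<and> Re (guess_weight d (N (proj (\<psi> j))) j) \<le> 1"
proof -
  let ?X = "N (proj (\<psi> j))"
  have nn: "Re (?X r r) \<ge> 0" "Im (?X r r) = 0" if "r < k*d" for r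
    using psd_diag[OF X_psd that] by auto
  have g: "guess_weight d ?X j = (\<Sum>i<d. ?X (j*d+i) (j*d+i))" unfolding guess_weight_def ..
  have im: "Im (guess_weight d ?X j) = 0" unfolding g Im_sum using nn(2) idx_lt[OF j] by simp
  have re0: "Re (guess_weight d ?X j) \<ge> 0" unfolding g Re_sum using nn(1) idx_lt[OF j] by (intro sum_nonneg) auto
  have fnn: "(\<Sum>i<d. Re (?X (b*d+i) (b*d+i))) \<ge> 0" if "b \<in> {..<k}" for b
    using that nn(1) idx_lt by (intro sum_nonneg) auto
  have "Re (guess_weight d ?X j) = (\<Sum>i<d. Re (?X (j*d+i) (j*d+i)))" unfolding g Re_sum ..
  also have "\<dots> \<le> (\<Sum>b<k. \<Sum>i<d. Re (?X (b*d+i) (b*d+i)))"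
    by (rule member_le_sum[of j "{..<k}" "\<lambda>b. \<Sum>i<d. Re (?X (b*d+i) (b*d+i))", OF _ fnn]) (use j in auto)
  also have "\<dots> = Re (mtrace (k*d) ?X)" unfolding mtrace_def Re_sum sum_split ..
  also have "\<dots> = 1" using X_trace[OF j] by simp
  finally show ?thesis using im re0 by simp
qed

lemma lam_nonneg: "j < k \<Longrightarrow> Re (mtrace d (dblock d (N Idm) j)) \<ge> 0"
  unfolding mtrace_def dblock_def Re_sum using psd_diag[OF D_psd] idx_lt by (intro sum_nonneg) auto

lemma lam_sum: "(\<Sum>j<k. Re (mtrace d (dblock d (N Idm) j))) = real d"
proof -
  have "(\<Sum>j<k. Re (mtrace d (dblock d (N Idm) j))) = Re (mtrace (k*d) (N Idm))"
    unfolding mtrace_def dblock_def Re_sum sum_split ..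
  then show ?thesis using D_trace by simp
qed

lemma elem_bound:
  assumes pnn: "\<forall>i<k. p i \<ge> 0" and psum: "(\<Sum>i<k. p i) = 1"
    and cond: "(\<Sum>j<k. complex_of_real (p j) * guess_weight d (N (proj (\<psi> j))) j) = 1"
  shows "0 \<le> (\<Sum>j<k. p j * robustness d (ptrace_B k d (N (proj (\<psi> j)))))
     \<and> (\<Sum>j<k. p j * robustness d (ptrace_B k d (N (proj (\<psi> j))))) \<le> real d * Max (p ` {..<k}) - 1"
proof -
  define g where "g j = guess_weight d (N (proj (\<psi> j))) j" for j
  define R where "R j = robustness d (ptrace_B k d (N (proj (\<psi> j))))" for j
  define lam where "lam j = Re (mtrace d (dblock d (N Idm) j))" for j
  define pm where "pm = Max (p ` {..<k})"
  have "(\<Sum>j<k. p j * Re (g j)) = 1"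
    using arg_cong[OF cond, of Re] unfolding g_def by (simp add: Re_sum)
  then have "(\<Sum>j<k. p j * (1 - Re (g j))) = 0" using psum by (simp add: algebra_simps sum_subtractf)
  moreover have "\<forall>j\<in>{..<k}. p j * (1 - Re (g j)) \<ge> 0" using pnn gw_props unfolding g_def by simp
  ultimately have z: "p j * (1 - Re (g j)) = 0" if "j < k" for j
    using sum_nonneg_eq_0_iff[of "{..<k}" "\<lambda>j. p j * (1 - Re (g j))"] that by simp
  have gw1: "g j = 1" if "j < k" "p j \<noteq> 0" for j
    using z[OF that(1)] that gw_props[OF that(1)] unfolding g_def by (simp add: complex_eq_iff)
  have each: "0 \<le> p j * R j \<and> p j * R j \<le> p j * (lam j - 1)" if "j < k" for j
  proof (cases "p j = 0")
    case True then show ?thesis by simp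
  next
    case False
    have "0 \<le> R j \<and> R j \<le> lam j - 1" using rob_bound[OF that gw1[OF that False, unfolded g_def]]
      unfolding R_def lam_def .
    then show ?thesis using pnn that by (simp add: mult_left_mono)
  qed
  have pm: "p j \<le> pm" if "j < k" for j unfolding pm_def using that by (intro Max_ge) auto
  have "(\<Sum>j<k. p j * R j) \<le> (\<Sum>j<k. p j * (lam j - 1))" using each by (intro sum_mono) auto
  also have "\<dots> = (\<Sum>j<k. p j * lam j) - 1" using psum by (simp add: algebra_simps sum_subtractf)
  also have "(\<Sum>j<k. p j * lam j) \<le> (\<Sum>j<k. pm * lam j)"
    using pm lam_nonneg unfolding lam_def by (intro sum_mono mult_right_mono) auto
  also have "(\<Sum>j<k. pm * lam j) = pm * real d" using lam_sum unfolding lam_def by (simp add: sum_distrib_left[symmetric])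
  finally have up: "(\<Sum>j<k. p j * R j) \<le> real d * pm - 1" by (simp add: mult.commute)
  have lo: "0 \<le> (\<Sum>j<k. p j * R j)" using each by (intro sum_nonneg) auto
  show ?thesis using up lo unfolding R_def pm_def by simp
qed

end


theorem theoremS1:
  fixes d k :: nat and p :: "nat \<Rightarrow> real" and \<psi> :: "nat \<Rightarrow> nat \<Rightarrow> complex"
  assumes "\<forall>i<k. p i \<ge> 0"
    and "(\<Sum>i<k. p i) = 1"
    and "\<forall>i<k. \<forall>j<k. inner d (\<psi> i) (\<psi> j) = (if i = j then 1 else 0)"
  shows "C_MIO d k p (\<lambda>i. proj (\<psi> i)) + S_min k p \<le> log 2 (real d)"
proof -
  note pnn = assms(1) and psum = assms(2) and ON = assms(3)
  have kpos: "0 < k" using psum by (cases k) auto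
  have dpos: "0 < d"
  proof (rule ccontr)
    assume "\<not> 0 < d"
    then have "d = 0" by simp
    then have "inner d (\<psi> 0) (\<psi> 0) = 0" unfolding inner_def by simp
    then show False using ON kpos by auto
  qed
  define pm where "pm = Max (p ` {..<k})"
  have pm_ge: "p j \<le> pm" if "j < k" for j unfolding pm_def using that by (intro Max_ge) auto
  have pm_pos: "pm > 0"
  proof (rule ccontr)
    assume "\<not> pm > 0"
    then have "(\<Sum>i<k. p i) \<le> (\<Sum>i<k. 0)" using pm_ge by (intro sum_mono) force
    then show False using psum by simp
  qed
  have Ps: "P_suc d k p (\<lambda>i. proj (\<psi> i)) = 1" by (rule P_suc_one[OF ON dpos kpos pnn psum])
  define E where "E = {(\<Sum>j<k. p j * robustness d (ptrace_B k d (N ((\<lambda>i. proj (\<psi> i)) j)))) | N.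
      MIO d (k * d) N \<and>
      (\<Sum>j<k. complex_of_real (p j) * guess_weight d (N ((\<lambda>i. proj (\<psi> i)) j)) j) = complex_of_real (P_suc d k p (\<lambda>i. proj (\<psi> i)))}"
  have eta: "eta_MIO d k p (\<lambda>i. proj (\<psi> i)) = Sup E" unfolding eta_MIO_def E_def ..
  have Ebd: "x \<le> real d * pm - 1 \<and> 0 \<le> x" if "x \<in> E" for x
  proof -
    from that obtain N where N: "MIO d (k * d) N"
      "(\<Sum>j<k. complex_of_real (p j) * guess_weight d (N (proj (\<psi> j))) j) = 1"
      and x: "x = (\<Sum>j<k. p j * robustness d (ptrace_B k d (N (proj (\<psi> j)))))"
      unfolding E_def Ps by auto
    show ?thesis using elem_bound[OF ON dpos kpos N(1) pnn psum N(2)] x unfolding pm_def by simp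
  qed
  define x0 where "x0 = (\<Sum>j<k. p j * robustness d (ptrace_B k d (N0 d k \<psi> (proj (\<psi> j)))))"
  have x0E: "x0 \<in> E"
  proof -
    have "(\<Sum>j<k. complex_of_real (p j) * guess_weight d (N0 d k \<psi> (proj (\<psi> j))) j)
        = (\<Sum>j<k. complex_of_real (p j))"
      using N0_gw[OF ON dpos kpos] by simp
    also have "\<dots> = complex_of_real (P_suc d k p (\<lambda>i. proj (\<psi> i)))" unfolding Ps
      using psum by (metis of_real_1 of_real_sum)
    finally show ?thesis unfolding E_def x0_def
      using N0_MIO[OF ON dpos kpos] by blast
  qed
  have Ene: "E \<noteq> {}" using x0E by blast
  have up: "Sup E \<le> real d * pm - 1" by (rule cSup_least[OF Ene]) (use Ebd in blast)
  have bdd: "bdd_above E" unfolding bdd_above_def using Ebd by blast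
  have lo: "0 \<le> Sup E" using Ebd[OF x0E] cSup_upper[OF x0E bdd] by linarith
  have "C_MIO d k p (\<lambda>i. proj (\<psi> i)) = log 2 (1 + Sup E)" unfolding C_MIO_def eta ..
  also have "\<dots> \<le> log 2 (real d * pm)"
    using up lo by (subst log_le_cancel_iff) auto
  also have "\<dots> = log 2 (real d) + log 2 pm" using dpos pm_pos by (simp add: log_mult)
  finally show ?thesis unfolding S_min_def pm_def[symmetric] by simp
qed

end
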